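(* If $X$ is a crowded submaximal space, then $X$ has no weakly converging sequences.
   Context: A space is crowded if it is non-empty and has no isolated points. A space is submaximal if every dense subset of it is open. A weakly converging sequence in $X$ is a countably infinite family $\mathcal S=\{S_n:n\in\omega\}$ of pairwise disjoint non-empty finite subsets of $X$ for which there is a point $x\in X$ such that for every neighborhood $W$ of $x$ there is a finite set $F\subseteq\omega$ with $S_n\cap W\neq\emptyset$ for all $n\in\omega\setminus F$. *)

theory Defs
  imports "HOL-Analysis.Analysis"
begin

definition isolated_point :: "'a topology \<Rightarrow> 'a \<Rightarrow> bool" where
  "isolated_point X x \<longleftrightarrow> x \<in> topspace X \<and> openin X {x}"

definition crowded :: "'a topology \<Rightarrow> bool" where
  "crowded X \<longleftrightarrow> topspace X \<noteq> {} \<and> (\<forall>x. \<not> isolated_point X x)"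

definition dense_in :: "'a topology \<Rightarrow> 'a set \<Rightarrow> bool" where
  "dense_in X D \<longleftrightarrow> D \<subseteq> topspace X \<and> X closure_of D = topspace X"

definition submaximal :: "'a topology \<Rightarrow> bool" where
  "submaximal X \<longleftrightarrow> (\<forall>D. dense_in X D \<longrightarrow> openin X D)"

definition neighbourhood :: "'a topology \<Rightarrow> 'a \<Rightarrow> 'a set \<Rightarrow> bool" where
  "neighbourhood X x W \<longleftrightarrow> (\<exists>U. openin X U \<and> x \<in> U \<and> U \<subseteq> W)"

definition weakly_converging_sequence :: "'a topology \<Rightarrow> (nat \<Rightarrow> 'a set) \<Rightarrow> bool" where
  "weakly_converging_sequence X S \<longleftrightarrow>
     (\<forall>n. S n \<subseteq> topspace X \<and> S n \<noteq> {} \<and> finite (S n)) \<and>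
     (\<forall>m n. m \<noteq> n \<longrightarrow> S m \<inter> S n = {}) \<and>
     (\<exists>x\<in>topspace X. \<forall>W. neighbourhood X x W \<longrightarrow>
        (\<exists>F. finite F \<and> (\<forall>n. n \<notin> F \<longrightarrow> S n \<inter> W \<noteq> {})))"

end

theory Submission
  imports Defs "HOL-Library.Countable"
begin

lemma no_inj_natset: "\<not> inj (q :: nat set \<Rightarrow> nat)"
proof
  assume "inj q"
  then have "surj (inv q)" by (rule inj_imp_surj_inv)
  then have "(inv q) ` UNIV = Pow UNIV" by simp
  then show False using Cantors_theorem by blast
qed

lemma sing_closed:
  assumes "crowded X" "submaximal X" "y \<in> topspace X"
  shows "closedin X {y}"
proof -
  have "X interior_of {y} = {}"
  proof (rule ccontr)
    assume "X interior_of {y} \<noteq> {}"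
    then have "X interior_of {y} = {y}" using interior_of_subset[of X "{y}"] by blast
    then have "openin X {y}" by (metis openin_interior_of)
    then show False using assms(1,3) unfolding crowded_def isolated_point_def by blast
  qed
  then have "dense_in X (topspace X - {y})"
    unfolding dense_in_def using closure_of_complement[of X "{y}"] by auto
  then have "openin X (topspace X - {y})" using assms(2) unfolding submaximal_def by blast
  then show ?thesis using assms(3) by (simp add: closedin_def)
qed

lemma finite_closed:
  assumes "crowded X" "submaximal X" "F \<subseteq> topspace X" "finite F"
  shows "closedin X F"
proof -
  have "F = (\<Union>y\<in>F. {y})" by auto
  moreover have "closedin X (\<Union>y\<in>F. {y})"
    using assms(3,4) by (intro closedin_Union) (auto intro!: sing_closed[OF assms(1,2)])
  ultimately show ?thesis by simp
qed

lemma finite_int_empty: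
  assumes "crowded X" "submaximal X" "F \<subseteq> topspace X" "finite F"
  shows "X interior_of F = {}"
proof (rule ccontr)
  let ?G = "X interior_of F"
  assume "?G \<noteq> {}"
  then obtain y where y: "y \<in> ?G" by blast
  have G: "?G \<subseteq> F" "openin X ?G" by (auto simp: interior_of_subset)
  then have fin: "finite (?G - {y})" using assms(4) finite_subset by blast
  have "closedin X (?G - {y})"
    using finite_closed[OF assms(1,2) _ fin] G assms(3) by blast
  then have o: "openin X (topspace X - (?G - {y}))" by auto
  have "{y} = ?G \<inter> (topspace X - (?G - {y}))" using y G assms(3) by auto
  then have "openin X {y}" using o G(2) by (metis openin_Int)
  moreover have "y \<in> topspace X" using y G assms(3) by auto
  ultimately show False using assms(1) unfolding crowded_def isolated_point_def by blast
qed

lemma emptyint_closed: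
  assumes "submaximal X" "C \<subseteq> topspace X" "X interior_of C = {}"
  shows "closedin X C"
proof -
  have "dense_in X (topspace X - C)"
    unfolding dense_in_def using closure_of_complement[of X C] assms by auto
  then have "openin X (topspace X - C)" using assms(1) unfolding submaximal_def by blast
  then show ?thesis using assms(2) by (simp add: closedin_def)
qed

definition code :: "nat set \<Rightarrow> nat \<Rightarrow> nat" where
  "code A k = to_nat (map (\<lambda>i. i \<in> A) [0..<k])"

lemma code_inj: "inj (code A)"
  unfolding code_def inj_def
  by (metis inj_to_nat injD length_map length_upt minus_nat.diff_0)

lemma code_ad:
  assumes "A \<noteq> B"
  shows "finite (range (code A) \<inter> range (code B))"
proof -
  obtain i where i: "(i \<in> A) \<noteq> (i \<in> B)" using assms by blast
  have "range (code A) \<inter> range (code B) \<subseteq> code A ` {..i}"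
  proof
    fix m assume "m \<in> range (code A) \<inter> range (code B)"
    then obtain k l where m: "m = code A k" "m = code B l" by blast
    then have eq: "map (\<lambda>i. i \<in> A) [0..<k] = map (\<lambda>i. i \<in> B) [0..<l]"
      unfolding code_def by (metis inj_to_nat injD)
    then have "k = l" by (metis length_map length_upt minus_nat.diff_0)
    have "k \<le> i"
    proof (rule ccontr)
      assume "\<not> k \<le> i"
      then have "i < k" by simp
      then have "map (\<lambda>i. i \<in> A) [0..<k] ! i = map (\<lambda>i. i \<in> B) [0..<l] ! i" using eq by simp
      then show False using \<open>i < k\<close> \<open>k = l\<close> i by simp
    qed
    then show "m \<in> code A ` {..i}" using m by auto
  qed
  then show ?thesis using finite_subset by blast
qed

theorem mainTheorem3:
  fixes X :: "'a topology"
  assumes "crowded X" and "submaximal X"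
  shows "\<not> (\<exists>S. weakly_converging_sequence X S)"
proof
  assume "\<exists>S. weakly_converging_sequence X S"
  then obtain S :: "nat \<Rightarrow> 'a set" and x where S: "\<And>n. S n \<subseteq> topspace X \<and> S n \<noteq> {} \<and> finite (S n)"
    and disj: "\<And>m n. m \<noteq> n \<Longrightarrow> S m \<inter> S n = {}"
    and x: "x \<in> topspace X" and conv: "\<And>W. neighbourhood X x W \<Longrightarrow>
        (\<exists>F. finite F \<and> (\<forall>n. n \<notin> F \<longrightarrow> S n \<inter> W \<noteq> {}))"
    unfolding weakly_converging_sequence_def by blast
  define T where "T A = (\<Union>n\<in>range (code A). S n) - {x}" for A
  have Tsub: "T A \<subseteq> topspace X" for A using S unfolding T_def by blast
  have "\<exists>A. X interior_of T A = {}"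
  proof (rule ccontr)
    assume "\<nexists>A. X interior_of T A = {}"
    then have "\<forall>A. \<exists>p. p \<in> X interior_of T A" by blast
    then obtain p where p: "\<And>A. p A \<in> X interior_of T A" by metis
    have pinj: "inj p"
    proof (rule injI)
      fix A B assume eq: "p A = p B"
      show "A = B"
      proof (rule ccontr)
        assume "A \<noteq> B"
        let ?F = "\<Union>n\<in>range (code A) \<inter> range (code B). S n"
        have fin: "finite ?F" using code_ad[OF \<open>A \<noteq> B\<close>] S by (intro finite_UN_I) auto
        have "T A \<inter> T B \<subseteq> ?F"
        proof
          fix z assume "z \<in> T A \<inter> T B"
          then obtain m n where "m \<in> range (code A)" "n \<in> range (code B)" "z \<in> S m" "z \<in> S n"
            unfolding T_def by blast
          then show "z \<in> ?F" using disj[of m n] by (cases "m = n") auto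
        qed
        then have "X interior_of (T A \<inter> T B) \<subseteq> X interior_of ?F"
          by (rule interior_of_mono)
        also have "\<dots> = {}" by (rule finite_int_empty[OF assms _ fin]) (use S in blast)
        finally show False using p[of A] p[of B] eq by (metis IntI empty_iff interior_of_Int subset_empty)
      qed
    qed
    have "range p \<subseteq> (\<Union>n. S n)"
    proof
      fix z assume "z \<in> range p"
      then obtain A where "z = p A" by blast
      then have "z \<in> T A" using p[of A] interior_of_subset[of X "T A"] by blast
      then show "z \<in> (\<Union>n. S n)" unfolding T_def by blast
    qed
    moreover have "countable (\<Union>n. S n)" using S by (intro countable_UN) (auto intro: countable_finite)
    ultimately have c: "countable (range p)" using countable_subset by blast
    have "inj (to_nat_on (range p) \<circ> p)"
      using pinj inj_on_to_nat_on[OF c] by (simp add: inj_on_def)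
    then show False using no_inj_natset by blast
  qed
  then obtain A where A: "X interior_of T A = {}" by blast
  have cl: "closedin X (T A)" using emptyint_closed[OF assms(2) Tsub A] .
  let ?W = "topspace X - T A"
  have "neighbourhood X x ?W" unfolding neighbourhood_def
  proof (intro exI[of _ ?W] conjI)
    show "openin X ?W" using cl by (simp add: openin_diff)
    show "x \<in> ?W" using x unfolding T_def by blast
  qed simp
  then obtain F where F: "finite F" "\<And>n. n \<notin> F \<Longrightarrow> S n \<inter> ?W \<noteq> {}" using conv by blast
  have "finite {n. x \<in> S n}"
  proof (cases "\<exists>n0. x \<in> S n0")
    case True
    then obtain n0 where "x \<in> S n0" by blast
    have "{n. x \<in> S n} \<subseteq> {n0}"
    proof
      fix n assume "n \<in> {n. x \<in> S n}"
      then show "n \<in> {n0}" using disj[of n n0] \<open>x \<in> S n0\<close> by auto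
    qed
    then show ?thesis using finite_subset by blast
  qed simp
  then have fin2: "finite (F \<union> {n. x \<in> S n})" using F by simp
  have "infinite (range (code A))"
    using code_inj[of A] by (simp add: finite_image_iff)
  then have "infinite (range (code A) - (F \<union> {n. x \<in> S n}))"
    using fin2 by (rule Diff_infinite_finite[rotated])
  then obtain n where "n \<in> range (code A) - (F \<union> {n. x \<in> S n})"
    using infinite_imp_nonempty by blast
  then have n: "n \<in> range (code A)" "n \<notin> F" "x \<notin> S n" by auto
  have "S n \<subseteq> T A" using n unfolding T_def by blast
  then have "S n \<inter> ?W = {}" by blast
  then show False using F(2) n by blast
qed

end
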